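(* Let $\varepsilon\ge0$ and assume the continuity assumption holds. Define $H:\mathbb{R}_+^{2K}\to\mathbb{R}$ by $$H(\lambda^{(1)},\lambda^{(2)})=\sum_{s\in\{-1,1\}}\mathbb{E}\left[\max_{k\in[K]}\big(\pi_sp_k(X,s)-s(\lambda^{(1)}_k-\lambda^{(2)}_k)\big)\,\Big|\,S=s\right]+\varepsilon\sum_{k=1}^K(\lambda^{(1)}_k+\lambda^{(2)}_k),$$ and let $(\lambda^{*(1)},\lambda^{*(2)})\in\arg\min_{\mathbb{R}_+^{2K}}H$. Then a classifier $g^*$ satisfies $g^*\in\arg\min_{g\in\mathcal{G}_{\varepsilon\text{-fair}}}\mathcal{R}(g)$ if and only if $g^*\in\arg\min_{g\in\mathcal{G}}\mathcal{R}_{\lambda^{*(1)},\lambda^{*(2)}}(g)$. Moreover, the classifier $$g^*_{\varepsilon\text{-fair}}(x,s)=\arg\max_{k\in[K]}\big(\pi_sp_k(x,s)-s(\lambda^{*(1)}_k-\lambda^{*(2)}_k)\big)$$ is an optimal $\varepsilon$-fair classifier.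
   Context: $(X,S,Y)\sim\mathbb{P}$, $X\in\mathcal{X}\subset\mathbb{R}^d$, $S\in\{-1,1\}$, $Y\in[K]$, $\pi_s=\mathbb{P}(S=s)>0$, $p_k(x,s)=\mathbb{P}(Y=k\mid X=x,S=s)$. $\mathcal{G}$ is the set of measurable classifiers $g:\mathcal{X}\times\{-1,1\}\to[K]$, with risk $\mathcal{R}(g)=\mathbb{P}(g(X,S)\ne Y)$. Writing $D_k(g)=\mathbb{P}(g(X,S)=k\mid S=1)-\mathbb{P}(g(X,S)=k\mid S=-1)$, $g$ is $\varepsilon$-fair ($g\in\mathcal{G}_{\varepsilon\text{-fair}}$) if $|D_k(g)|\le\varepsilon$ for all $k\in[K]$. The $\varepsilon$-fair-risk is $\mathcal{R}_{\lambda^{(1)},\lambda^{(2)}}(g)=\mathcal{R}(g)+\sum_k\lambda^{(1)}_k[D_k(g)-\varepsilon]+\sum_k\lambda^{(2)}_k[-D_k(g)-\varepsilon]$ for $\lambda^{(1)},\lambda^{(2)}\in\mathbb{R}_+^K$. Continuity assumption: for all $k\neq j$ and $s$, $t\mapsto\mathbb{P}(p_k(X,S)-p_j(X,S)\le t\mid S=s)$ is continuous. *)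

theory Defs
  imports "HOL-Probability.Probability"
begin

text \<open>Probability setting: sample space M, X valued in a Euclidean space (playing R^d),
  S valued in {-1,1} (as int), Y valued in {1..K} (as nat).\<close>

definition piS :: "'a measure \<Rightarrow> ('a \<Rightarrow> int) \<Rightarrow> int \<Rightarrow> real" where
  "piS M S s = measure M {\<omega>\<in>space M. S \<omega> = s}"

definition cond_prob :: "'a measure \<Rightarrow> ('a \<Rightarrow> int) \<Rightarrow> int \<Rightarrow> 'a set \<Rightarrow> real" where
  "cond_prob M S s A = measure M (A \<inter> {\<omega>\<in>space M. S \<omega> = s}) / piS M S s"

definition cond_exp :: "'a measure \<Rightarrow> ('a \<Rightarrow> int) \<Rightarrow> int \<Rightarrow> ('a \<Rightarrow> real) \<Rightarrow> real" where
  "cond_exp M S s f = (\<integral>\<omega>. indicator {\<omega>\<in>space M. S \<omega> = s} \<omega> * f \<omega> \<partial>M) / piS M S s"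

definition classifiers :: "nat \<Rightarrow> ('x::euclidean_space \<Rightarrow> int \<Rightarrow> nat) set" where
  "classifiers K = {g. (\<forall>x. \<forall>s\<in>{-1, 1::int}. g x s \<in> {1..K}) \<and>
                       (\<forall>s\<in>{-1, 1::int}. (\<lambda>x. g x s) \<in> borel \<rightarrow>\<^sub>M count_space UNIV)}"

definition risk :: "'a measure \<Rightarrow> ('a \<Rightarrow> 'x) \<Rightarrow> ('a \<Rightarrow> int) \<Rightarrow> ('a \<Rightarrow> nat)
    \<Rightarrow> ('x \<Rightarrow> int \<Rightarrow> nat) \<Rightarrow> real" where
  "risk M X S Y g = measure M {\<omega>\<in>space M. g (X \<omega>) (S \<omega>) \<noteq> Y \<omega>}"

definition unfair :: "'a measure \<Rightarrow> ('a \<Rightarrow> 'x) \<Rightarrow> ('a \<Rightarrow> int)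
    \<Rightarrow> ('x \<Rightarrow> int \<Rightarrow> nat) \<Rightarrow> nat \<Rightarrow> real" where
  "unfair M X S g k =
     cond_prob M S 1 {\<omega>\<in>space M. g (X \<omega>) (S \<omega>) = k}
   - cond_prob M S (-1) {\<omega>\<in>space M. g (X \<omega>) (S \<omega>) = k}"

definition eps_fair :: "'a measure \<Rightarrow> ('a \<Rightarrow> 'x::euclidean_space) \<Rightarrow> ('a \<Rightarrow> int)
    \<Rightarrow> nat \<Rightarrow> real \<Rightarrow> ('x \<Rightarrow> int \<Rightarrow> nat) set" where
  "eps_fair M X S K eps = {g \<in> classifiers K. \<forall>k\<in>{1..K}. \<bar>unfair M X S g k\<bar> \<le> eps}"

definition fair_risk :: "'a measure \<Rightarrow> ('a \<Rightarrow> 'x) \<Rightarrow> ('a \<Rightarrow> int) \<Rightarrow> ('a \<Rightarrow> nat)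
    \<Rightarrow> nat \<Rightarrow> real \<Rightarrow> (nat \<Rightarrow> real) \<Rightarrow> (nat \<Rightarrow> real) \<Rightarrow> ('x \<Rightarrow> int \<Rightarrow> nat) \<Rightarrow> real" where
  "fair_risk M X S Y K eps l1 l2 g = risk M X S Y g
     + (\<Sum>k\<in>{1..K}. l1 k * (unfair M X S g k - eps))
     + (\<Sum>k\<in>{1..K}. l2 k * (- unfair M X S g k - eps))"

definition score :: "'a measure \<Rightarrow> ('a \<Rightarrow> int) \<Rightarrow> (nat \<Rightarrow> 'x \<Rightarrow> int \<Rightarrow> real)
    \<Rightarrow> (nat \<Rightarrow> real) \<Rightarrow> (nat \<Rightarrow> real) \<Rightarrow> nat \<Rightarrow> 'x \<Rightarrow> int \<Rightarrow> real" where
  "score M S p l1 l2 k x s = piS M S s * p k x s - real_of_int s * (l1 k - l2 k)"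

definition Hfun :: "'a measure \<Rightarrow> ('a \<Rightarrow> 'x) \<Rightarrow> ('a \<Rightarrow> int) \<Rightarrow> (nat \<Rightarrow> 'x \<Rightarrow> int \<Rightarrow> real)
    \<Rightarrow> nat \<Rightarrow> real \<Rightarrow> (nat \<Rightarrow> real) \<Rightarrow> (nat \<Rightarrow> real) \<Rightarrow> real" where
  "Hfun M X S p K eps l1 l2 =
     (\<Sum>s\<in>{-1, 1::int}. cond_exp M S s
         (\<lambda>\<omega>. Max ((\<lambda>k. score M S p l1 l2 k (X \<omega>) s) ` {1..K})))
     + eps * (\<Sum>k\<in>{1..K}. l1 k + l2 k)"

definition nonneg_vec :: "nat \<Rightarrow> (nat \<Rightarrow> real) \<Rightarrow> bool" where
  "nonneg_vec K l \<longleftrightarrow> (\<forall>k\<in>{1..K}. 0 \<le> l k)"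

definition fair_argmax :: "'a measure \<Rightarrow> ('a \<Rightarrow> int) \<Rightarrow> (nat \<Rightarrow> 'x \<Rightarrow> int \<Rightarrow> real)
    \<Rightarrow> nat \<Rightarrow> (nat \<Rightarrow> real) \<Rightarrow> (nat \<Rightarrow> real) \<Rightarrow> 'x \<Rightarrow> int \<Rightarrow> nat" where
  "fair_argmax M S p K l1 l2 x s =
     (LEAST k. k \<in> {1..K} \<and> (\<forall>j\<in>{1..K}. score M S p l1 l2 j x s \<le> score M S p l1 l2 k x s))"

text \<open>p is a version of the conditional probability P(Y = k | X = x, S = s).\<close>
definition is_cond_prob_version :: "'a measure \<Rightarrow> ('a \<Rightarrow> 'x::euclidean_space) \<Rightarrow> ('a \<Rightarrow> int)
    \<Rightarrow> ('a \<Rightarrow> nat) \<Rightarrow> nat \<Rightarrow> (nat \<Rightarrow> 'x \<Rightarrow> int \<Rightarrow> real) \<Rightarrow> bool" where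
  "is_cond_prob_version M X S Y K p \<longleftrightarrow>
     (\<forall>k\<in>{1..K}. \<forall>s\<in>{-1, 1::int}.
        (\<lambda>x. p k x s) \<in> borel_measurable borel \<and>
        (\<forall>x. 0 \<le> p k x s \<and> p k x s \<le> 1) \<and>
        (\<forall>B\<in>sets borel.
           measure M {\<omega>\<in>space M. X \<omega> \<in> B \<and> S \<omega> = s \<and> Y \<omega> = k}
           = (\<integral>\<omega>. indicator {\<omega>\<in>space M. X \<omega> \<in> B \<and> S \<omega> = s} \<omega> * p k (X \<omega>) s \<partial>M)))"

definition continuity_assumption :: "'a measure \<Rightarrow> ('a \<Rightarrow> 'x) \<Rightarrow> ('a \<Rightarrow> int)
    \<Rightarrow> nat \<Rightarrow> (nat \<Rightarrow> 'x \<Rightarrow> int \<Rightarrow> real) \<Rightarrow> bool" where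
  "continuity_assumption M X S K p \<longleftrightarrow>
     (\<forall>k\<in>{1..K}. \<forall>j\<in>{1..K}. k \<noteq> j \<longrightarrow> (\<forall>s\<in>{-1, 1::int}.
        continuous_on UNIV (\<lambda>t::real. cond_prob M S s
            {\<omega>\<in>space M. p k (X \<omega>) (S \<omega>) - p j (X \<omega>) (S \<omega>) \<le> t})))"

end

theory Submission
  imports Defs
begin

locale fsetup = prob_space M
  for M :: "'a measure" and X :: "'a \<Rightarrow> 'x::euclidean_space" and S :: "'a \<Rightarrow> int"
    and Y :: "'a \<Rightarrow> nat" and K :: nat and p :: "nat \<Rightarrow> 'x \<Rightarrow> int \<Rightarrow> real" +
  assumes Xm[measurable]: "X \<in> borel_measurable M"
    and Sm[measurable]: "S \<in> M \<rightarrow>\<^sub>M count_space UNIV"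
    and Ym[measurable]: "Y \<in> M \<rightarrow>\<^sub>M count_space UNIV"
    and Sv: "\<forall>\<omega>\<in>space M. S \<omega> \<in> {-1, 1}"
    and Yv: "\<forall>\<omega>\<in>space M. Y \<omega> \<in> {1..K}"
    and pipos: "\<forall>s\<in>{-1, 1::int}. piS M S s > 0"
    and cpv: "is_cond_prob_version M X S Y K p"
begin

lemma K_pos: "1 \<le> K"
  using not_empty Yv by fastforce

lemma pi_pos: "s \<in> {-1,1} \<Longrightarrow> piS M S s > 0" using pipos by auto

lemma pi_le1: "piS M S s \<le> 1" unfolding piS_def by simp

lemma p_meas: "k\<in>{1..K} \<Longrightarrow> s\<in>{-1,1} \<Longrightarrow> (\<lambda>x. p k x s) \<in> borel_measurable borel"
  using cpv unfolding is_cond_prob_version_def by auto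

lemma p_bnd: "k\<in>{1..K} \<Longrightarrow> s\<in>{-1,1} \<Longrightarrow> 0 \<le> p k x s \<and> p k x s \<le> 1"
  using cpv unfolding is_cond_prob_version_def by auto

lemma p_cpv: "k\<in>{1..K} \<Longrightarrow> s\<in>{-1,1} \<Longrightarrow> B \<in> sets borel \<Longrightarrow>
   measure M {\<omega>\<in>space M. X \<omega> \<in> B \<and> S \<omega> = s \<and> Y \<omega> = k}
           = (\<integral>\<omega>. indicator {\<omega>\<in>space M. X \<omega> \<in> B \<and> S \<omega> = s} \<omega> * p k (X \<omega>) s \<partial>M)"
  using cpv unfolding is_cond_prob_version_def by auto

lemma meas_XS:
  assumes "(\<lambda>x. f x 1) \<in> borel \<rightarrow>\<^sub>M N" "(\<lambda>x. f x (-1)) \<in> borel \<rightarrow>\<^sub>M N"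
  shows "(\<lambda>\<omega>. f (X \<omega>) (S \<omega>)) \<in> M \<rightarrow>\<^sub>M N"
proof -
  have "(\<lambda>\<omega>. if S \<omega> = 1 then f (X \<omega>) 1 else f (X \<omega>) (-1)) \<in> M \<rightarrow>\<^sub>M N"
    by (rule measurable_If[OF measurable_compose[OF Xm assms(1)] measurable_compose[OF Xm assms(2)]]) measurable
  then show ?thesis by (rule measurable_cong[THEN iffD1, rotated]) (use Sv in auto)
qed

lemma pXS_meas[measurable]: "k\<in>{1..K} \<Longrightarrow> (\<lambda>\<omega>. p k (X \<omega>) (S \<omega>)) \<in> borel_measurable M"
  by (rule meas_XS) (auto intro: p_meas)

lemma cl_meas_s: "g \<in> classifiers K \<Longrightarrow> s\<in>{-1,1} \<Longrightarrow> (\<lambda>\<omega>. g (X \<omega>) s) \<in> M \<rightarrow>\<^sub>M count_space UNIV"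
  unfolding classifiers_def by (auto intro: measurable_compose[OF Xm])

lemma cl_meas: "g \<in> classifiers K \<Longrightarrow> (\<lambda>\<omega>. g (X \<omega>) (S \<omega>)) \<in> M \<rightarrow>\<^sub>M count_space UNIV"
  unfolding classifiers_def by (rule meas_XS) auto

lemma cl_val: "g \<in> classifiers K \<Longrightarrow> s\<in>{-1,1} \<Longrightarrow> g x s \<in> {1..K}"
  unfolding classifiers_def by auto

lemma cl_set_borel: "g \<in> classifiers K \<Longrightarrow> s\<in>{-1,1} \<Longrightarrow> {x. g x s = k} \<in> sets borel"
proof -
  assume a: "g \<in> classifiers K" "s\<in>{-1,1}"
  have "(\<lambda>x. g x s) \<in> borel \<rightarrow>\<^sub>M count_space UNIV" using a unfolding classifiers_def by auto
  from measurable_sets[OF this, of "{k}"] show ?thesis by (simp add: vimage_def)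
qed

lemma score_meas: "k\<in>{1..K} \<Longrightarrow> s\<in>{-1,1} \<Longrightarrow> (\<lambda>x. score M S p l1 l2 k x s) \<in> borel_measurable borel"
  unfolding score_def by (intro borel_measurable_diff borel_measurable_times borel_measurable_const p_meas)

lemma fa_prop: "fair_argmax M S p K l1 l2 x s \<in> {1..K} \<and> (\<forall>j\<in>{1..K}. score M S p l1 l2 j x s \<le> score M S p l1 l2 (fair_argmax M S p K l1 l2 x s) x s)"
proof -
  let ?f = "\<lambda>k. score M S p l1 l2 k x s"
  have fin: "finite (?f ` {1..K})" "?f ` {1..K} \<noteq> {}" using K_pos by auto
  obtain k0 where "k0\<in>{1..K}" "?f k0 = Max (?f ` {1..K})" using Max_in[OF fin] by auto
  note k0 = this
  have "\<forall>j\<in>{1..K}. ?f j \<le> ?f k0"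
  proof
    fix j assume "j \<in> {1..K}"
    then have "?f j \<le> Max (?f ` {1..K})" by (intro Max_ge[OF fin(1)]) auto
    then show "?f j \<le> ?f k0" using k0 by simp
  qed
  then have ex: "\<exists>k. k\<in>{1..K} \<and> (\<forall>j\<in>{1..K}. ?f j \<le> ?f k)" using k0 by blast
  show ?thesis unfolding fair_argmax_def by (rule LeastI_ex[OF ex])
qed

lemma fa_max: "score M S p l1 l2 (fair_argmax M S p K l1 l2 x s) x s = Max ((\<lambda>k. score M S p l1 l2 k x s) ` {1..K})"
proof -
  let ?f = "\<lambda>k. score M S p l1 l2 k x s"
  have fin: "finite (?f ` {1..K})" "?f ` {1..K} \<noteq> {}" using K_pos by auto
  have P: "fair_argmax M S p K l1 l2 x s \<in> {1..K}" "\<forall>j\<in>{1..K}. ?f j \<le> ?f (fair_argmax M S p K l1 l2 x s)"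
    using fa_prop[of l1 l2 x s] by auto
  show ?thesis
  proof (rule antisym)
    show "?f (fair_argmax M S p K l1 l2 x s) \<le> Max (?f ` {1..K})" using P(1) by (intro Max_ge[OF fin(1)]) auto
    show "Max (?f ` {1..K}) \<le> ?f (fair_argmax M S p K l1 l2 x s)" using P(2) by (intro Max.boundedI[OF fin]) auto
  qed
qed

lemma fa_meas: assumes s: "s \<in> {-1,1}"
  shows "(\<lambda>x. fair_argmax M S p K l1 l2 x s) \<in> borel \<rightarrow>\<^sub>M count_space UNIV"
  unfolding fair_argmax_def
proof (rule measurable_Least)
  fix i :: nat
  show "(\<lambda>x. i \<in> {1..K} \<and> (\<forall>j\<in>{1..K}. score M S p l1 l2 j x s \<le> score M S p l1 l2 i x s)) \<in> borel \<rightarrow>\<^sub>M count_space UNIV"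
  proof (cases "i \<in> {1..K}")
    case True
    have "Measurable.pred borel (\<lambda>x. \<forall>j\<in>{1..K}. score M S p l1 l2 j x s \<le> score M S p l1 l2 i x s)"
    proof (rule pred_intros_finite(3))
      fix j assume j: "j \<in> {1..K}"
      show "Measurable.pred borel (\<lambda>x. score M S p l1 l2 j x s \<le> score M S p l1 l2 i x s)"
        unfolding pred_def by (rule borel_measurable_le[OF score_meas[OF j s] score_meas[OF True s]])
    qed (rule finite_atLeastAtMost)
    then show ?thesis using True by (simp only: simp_thms True)
  next
    case False
    then show ?thesis by (simp only: simp_thms False) (simp add: pred_def)
  qed
qed

lemma fa_cl: "fair_argmax M S p K l1 l2 \<in> classifiers K"
  unfolding classifiers_def using fa_prop fa_meas by blast

lemma integ_bnd: "(f :: 'a \<Rightarrow> real) \<in> borel_measurable M \<Longrightarrow> (\<And>\<omega>. \<omega> \<in> space M \<Longrightarrow> \<bar>f \<omega>\<bar> \<le> B) \<Longrightarrow> integrable M f"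
  by (rule integrable_const_bound[where B=B]) (auto intro!: AE_I2)

lemma a_part:
  assumes g: "g \<in> classifiers K" and s: "s \<in> {-1,1}"
  shows "integrable M (\<lambda>\<omega>. indicator {\<omega>\<in>space M. S \<omega> = s} \<omega> * score M S p l1 l2 (g (X \<omega>) s) (X \<omega>) s)
    \<and> (\<integral>\<omega>. indicator {\<omega>\<in>space M. S \<omega> = s} \<omega> * score M S p l1 l2 (g (X \<omega>) s) (X \<omega>) s \<partial>M)
      = piS M S s * (\<Sum>k\<in>{1..K}. measure M {\<omega>\<in>space M. g (X \<omega>) s = k \<and> S \<omega> = s \<and> Y \<omega> = k})
        - real_of_int s * (\<Sum>k\<in>{1..K}. (l1 k - l2 k) * measure M ({\<omega>\<in>space M. g (X \<omega>) (S \<omega>) = k} \<inter> {\<omega>\<in>space M. S \<omega> = s}))"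
proof -
  have [measurable]: "(\<lambda>\<omega>. g (X \<omega>) s) \<in> M \<rightarrow>\<^sub>M count_space UNIV" using cl_meas_s[OF g s] .
  have [measurable]: "(\<lambda>\<omega>. g (X \<omega>) (S \<omega>)) \<in> M \<rightarrow>\<^sub>M count_space UNIV" using cl_meas[OF g] .
  define a where "a k \<omega> = indicator {\<omega>\<in>space M. g (X \<omega>) s = k \<and> S \<omega> = s} \<omega> * p k (X \<omega>) s" for k \<omega>
  define c :: "nat \<Rightarrow> 'a \<Rightarrow> real" where "c k \<omega> = indicator ({\<omega>\<in>space M. g (X \<omega>) (S \<omega>) = k} \<inter> {\<omega>\<in>space M. S \<omega> = s}) \<omega>" for k \<omega>
  have pw: "indicator {\<omega>\<in>space M. S \<omega> = s} \<omega> * score M S p l1 l2 (g (X \<omega>) s) (X \<omega>) s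
     = piS M S s * (\<Sum>k\<in>{1..K}. a k \<omega>) - real_of_int s * (\<Sum>k\<in>{1..K}. (l1 k - l2 k) * c k \<omega>)"
    if w: "\<omega> \<in> space M" for \<omega>
  proof -
    define k0 where "k0 = g (X \<omega>) s"
    have k0: "k0 \<in> {1..K}" unfolding k0_def using cl_val[OF g s] .
    have "(\<Sum>k\<in>{1..K}. a k \<omega>) = (\<Sum>k\<in>{1..K}. if k = k0 then (if S \<omega> = s then p k (X \<omega>) s else 0) else 0)"
      by (rule sum.cong) (auto simp: a_def indicator_def w k0_def)
    also have "\<dots> = (if S \<omega> = s then p k0 (X \<omega>) s else 0)" using k0 by (simp add: sum.delta)
    finally have A: "(\<Sum>k\<in>{1..K}. a k \<omega>) = (if S \<omega> = s then p k0 (X \<omega>) s else 0)" .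
    have "(\<Sum>k\<in>{1..K}. (l1 k - l2 k) * c k \<omega>) = (\<Sum>k\<in>{1..K}. if k = k0 then (if S \<omega> = s then l1 k - l2 k else 0) else 0)"
      by (rule sum.cong) (auto simp: c_def indicator_def w k0_def)
    also have "\<dots> = (if S \<omega> = s then l1 k0 - l2 k0 else 0)" using k0 by (simp add: sum.delta)
    finally have C: "(\<Sum>k\<in>{1..K}. (l1 k - l2 k) * c k \<omega>) = (if S \<omega> = s then l1 k0 - l2 k0 else 0)" .
    show ?thesis unfolding A C by (simp add: score_def indicator_def w k0_def)
  qed
  have ia: "integrable M (a k)" if k: "k \<in> {1..K}" for k
  proof (rule integ_bnd[where B=1])
    have [measurable]: "(\<lambda>\<omega>. p k (X \<omega>) s) \<in> borel_measurable M"
      by (rule measurable_compose[OF Xm p_meas[OF k s]])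
    show "a k \<in> borel_measurable M" unfolding a_def by measurable
    show "\<bar>a k \<omega>\<bar> \<le> 1" for \<omega> using p_bnd[OF k s, of "X \<omega>"] by (auto simp: a_def indicator_def)
  qed
  have ic: "integrable M (c k)" for k
  proof (rule integ_bnd[where B=1])
    show "c k \<in> borel_measurable M" unfolding c_def by measurable
    show "\<bar>c k \<omega>\<bar> \<le> 1" for \<omega> by (auto simp: c_def indicator_def)
  qed
  have int_a: "integral\<^sup>L M (a k) = measure M {\<omega>\<in>space M. g (X \<omega>) s = k \<and> S \<omega> = s \<and> Y \<omega> = k}"
    if k: "k \<in> {1..K}" for k
    using p_cpv[OF k s cl_set_borel[OF g s, of k]] by (simp add: a_def[abs_def])
  have int_c: "integral\<^sup>L M (c k) = measure M ({\<omega>\<in>space M. g (X \<omega>) (S \<omega>) = k} \<inter> {\<omega>\<in>space M. S \<omega> = s})" for k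
    unfolding c_def by (simp add: Int_absorb2 Int_lower2 Int_assoc)
  have 1: "integrable M (\<lambda>\<omega>. \<Sum>k\<in>{1..K}. a k \<omega>)" using ia by (rule Bochner_Integration.integrable_sum)
  have 2: "integrable M (\<lambda>\<omega>. \<Sum>k\<in>{1..K}. (l1 k - l2 k) * c k \<omega>)"
    by (rule Bochner_Integration.integrable_sum, rule Bochner_Integration.integrable_mult_right, rule ic)
  have iR: "integrable M (\<lambda>\<omega>. piS M S s * (\<Sum>k\<in>{1..K}. a k \<omega>) - real_of_int s * (\<Sum>k\<in>{1..K}. (l1 k - l2 k) * c k \<omega>))"
    by (rule Bochner_Integration.integrable_diff; rule Bochner_Integration.integrable_mult_right) (use 1 2 in auto)
  have "(\<integral>\<omega>. piS M S s * (\<Sum>k\<in>{1..K}. a k \<omega>) - real_of_int s * (\<Sum>k\<in>{1..K}. (l1 k - l2 k) * c k \<omega>) \<partial>M)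
     = piS M S s * (\<integral>\<omega>. (\<Sum>k\<in>{1..K}. a k \<omega>) \<partial>M) - real_of_int s * (\<integral>\<omega>. (\<Sum>k\<in>{1..K}. (l1 k - l2 k) * c k \<omega>) \<partial>M)"
    using 1 2 by simp
  also have "\<dots> = piS M S s * (\<Sum>k\<in>{1..K}. integral\<^sup>L M (a k)) - real_of_int s * (\<Sum>k\<in>{1..K}. (l1 k - l2 k) * integral\<^sup>L M (c k))"
    using ia ic by (simp add: Bochner_Integration.integral_sum)
  also have "\<dots> = piS M S s * (\<Sum>k\<in>{1..K}. measure M {\<omega>\<in>space M. g (X \<omega>) s = k \<and> S \<omega> = s \<and> Y \<omega> = k})
        - real_of_int s * (\<Sum>k\<in>{1..K}. (l1 k - l2 k) * measure M ({\<omega>\<in>space M. g (X \<omega>) (S \<omega>) = k} \<inter> {\<omega>\<in>space M. S \<omega> = s}))"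
    using int_a int_c by simp
  finally show ?thesis using iR pw by (simp add: Bochner_Integration.integrable_cong[OF refl pw] Bochner_Integration.integral_cong[OF refl pw])
qed

lemma Coll_Int_space[simp]: "{\<omega>\<in>space M. P \<omega>} \<inter> space M = {\<omega>\<in>space M. P \<omega>}" by auto

lemma ind_int: "{\<omega>\<in>space M. P \<omega>} \<in> sets M \<Longrightarrow> (\<integral>\<omega>. indicator {\<omega>\<in>space M. P \<omega>} \<omega> \<partial>M) = measure M {\<omega>\<in>space M. P \<omega>}"
  by (simp add: Int_absorb2 subset_iff)

lemma b_part:
  assumes g: "g \<in> classifiers K"
  shows "(\<Sum>s\<in>{-1,1::int}. \<Sum>k\<in>{1..K}. measure M {\<omega>\<in>space M. g (X \<omega>) s = k \<and> S \<omega> = s \<and> Y \<omega> = k})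
     = 1 - risk M X S Y g"
proof -
  have [measurable]: "(\<lambda>\<omega>. g (X \<omega>) 1) \<in> M \<rightarrow>\<^sub>M count_space UNIV" using cl_meas_s[OF g, of 1] by simp
  have [measurable]: "(\<lambda>\<omega>. g (X \<omega>) (-1)) \<in> M \<rightarrow>\<^sub>M count_space UNIV" using cl_meas_s[OF g, of "-1"] by simp
  have [measurable]: "(\<lambda>\<omega>. g (X \<omega>) (S \<omega>)) \<in> M \<rightarrow>\<^sub>M count_space UNIV" using cl_meas[OF g] .
  have ms: "{\<omega>\<in>space M. g (X \<omega>) s = k \<and> S \<omega> = s \<and> Y \<omega> = k} \<in> sets M" if "s \<in> {-1,1::int}" for s k
    using that by auto
  have mGY: "{\<omega>\<in>space M. g (X \<omega>) (S \<omega>) = Y \<omega>} \<in> sets M"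
  proof -
    have "{\<omega>\<in>space M. g (X \<omega>) (S \<omega>) = Y \<omega>} = (\<Union>k. {\<omega>\<in>space M. g (X \<omega>) (S \<omega>) = k \<and> Y \<omega> = k})" by auto
    also have "\<dots> \<in> sets M" by measurable
    finally show ?thesis .
  qed
  define I :: "int \<Rightarrow> nat \<Rightarrow> 'a \<Rightarrow> real" where "I s k \<omega> = indicator {\<omega>\<in>space M. g (X \<omega>) s = k \<and> S \<omega> = s \<and> Y \<omega> = k} \<omega>" for s k \<omega>
  have iI: "integrable M (I s k)" if "s \<in> {-1,1::int}" for s k
  proof (rule integ_bnd[where B=1])
    show "I s k \<in> borel_measurable M" unfolding I_def using ms[OF that] by (rule borel_measurable_indicator)
    show "\<bar>I s k \<omega>\<bar> \<le> 1" for \<omega> by (auto simp: I_def indicator_def)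
  qed
  have "(\<Sum>s\<in>{-1,1::int}. \<Sum>k\<in>{1..K}. measure M {\<omega>\<in>space M. g (X \<omega>) s = k \<and> S \<omega> = s \<and> Y \<omega> = k})
     = (\<Sum>s\<in>{-1,1::int}. \<Sum>k\<in>{1..K}. integral\<^sup>L M (I s k))"
    by (intro sum.cong refl) (simp add: I_def[abs_def] ind_int[OF ms])
  also have "\<dots> = (\<Sum>s\<in>{-1,1::int}. integral\<^sup>L M (\<lambda>\<omega>. \<Sum>k\<in>{1..K}. I s k \<omega>))"
    by (intro sum.cong refl Bochner_Integration.integral_sum[symmetric] iI) auto
  also have "\<dots> = integral\<^sup>L M (\<lambda>\<omega>. \<Sum>s\<in>{-1,1::int}. \<Sum>k\<in>{1..K}. I s k \<omega>)"
    by (intro Bochner_Integration.integral_sum[symmetric] Bochner_Integration.integrable_sum iI) auto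
  also have "\<dots> = integral\<^sup>L M (indicator {\<omega>\<in>space M. g (X \<omega>) (S \<omega>) = Y \<omega>})"
  proof (rule Bochner_Integration.integral_cong[OF refl])
    fix \<omega> assume w: "\<omega> \<in> space M"
    have inner: "(\<Sum>k\<in>{1..K}. I s k \<omega>) = (if g (X \<omega>) s = Y \<omega> \<and> S \<omega> = s then 1 else 0)" for s
    proof -
      have "(\<Sum>k\<in>{1..K}. I s k \<omega>) = (\<Sum>k\<in>{1..K}. if k = Y \<omega> then (if g (X \<omega>) s = Y \<omega> \<and> S \<omega> = s then 1 else 0) else 0)"
        by (rule sum.cong) (auto simp: I_def indicator_def w)
      also have "\<dots> = (if g (X \<omega>) s = Y \<omega> \<and> S \<omega> = s then 1 else 0)" using Yv w by (simp add: sum.delta)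
      finally show ?thesis .
    qed
    show "(\<Sum>s\<in>{-1,1::int}. \<Sum>k\<in>{1..K}. I s k \<omega>) = indicator {\<omega>\<in>space M. g (X \<omega>) (S \<omega>) = Y \<omega>} \<omega>"
      using Sv w unfolding inner by (auto simp: indicator_def)
  qed
  also have "\<dots> = prob {\<omega>\<in>space M. g (X \<omega>) (S \<omega>) = Y \<omega>}"
    by (rule ind_int[OF mGY])
  also have "\<dots> = 1 - risk M X S Y g"
  proof -
    have "{\<omega>\<in>space M. g (X \<omega>) (S \<omega>) \<noteq> Y \<omega>} = space M - {\<omega>\<in>space M. g (X \<omega>) (S \<omega>) = Y \<omega>}" by auto
    then have "risk M X S Y g = 1 - prob {\<omega>\<in>space M. g (X \<omega>) (S \<omega>) = Y \<omega>}"
      unfolding risk_def by (simp add: prob_compl[OF mGY])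
    then show ?thesis by simp
  qed
  finally show ?thesis .
qed

lemma unfair_eq: "unfair M X S g k = measure M ({\<omega>\<in>space M. g (X \<omega>) (S \<omega>) = k} \<inter> {\<omega>\<in>space M. S \<omega> = 1}) / piS M S 1
   - measure M ({\<omega>\<in>space M. g (X \<omega>) (S \<omega>) = k} \<inter> {\<omega>\<in>space M. S \<omega> = -1}) / piS M S (-1)"
  unfolding unfair_def cond_prob_def by simp

lemma J_eq:
  assumes g: "g \<in> classifiers K"
  shows "(\<Sum>s\<in>{-1,1::int}. cond_exp M S s (\<lambda>\<omega>. score M S p l1 l2 (g (X \<omega>) s) (X \<omega>) s))
     = 1 - risk M X S Y g - (\<Sum>k\<in>{1..K}. (l1 k - l2 k) * unfair M X S g k)"
proof -
  define A where "A s = (\<Sum>k\<in>{1..K}. measure M {\<omega>\<in>space M. g (X \<omega>) s = k \<and> S \<omega> = s \<and> Y \<omega> = k})" for s :: int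
  define C where "C s k = measure M ({\<omega>\<in>space M. g (X \<omega>) (S \<omega>) = k} \<inter> {\<omega>\<in>space M. S \<omega> = s})" for s :: int and k
  have ce: "cond_exp M S s (\<lambda>\<omega>. score M S p l1 l2 (g (X \<omega>) s) (X \<omega>) s)
     = A s - real_of_int s * (\<Sum>k\<in>{1..K}. (l1 k - l2 k) * C s k) / piS M S s" if s: "s \<in> {-1,1}" for s
  proof -
    have pp: "piS M S s > 0" using pi_pos[OF s] .
    have "cond_exp M S s (\<lambda>\<omega>. score M S p l1 l2 (g (X \<omega>) s) (X \<omega>) s)
       = (piS M S s * A s - real_of_int s * (\<Sum>k\<in>{1..K}. (l1 k - l2 k) * C s k)) / piS M S s"
      unfolding cond_exp_def using a_part[OF g s, of l1 l2] by (simp add: A_def C_def)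
    also have "\<dots> = A s - real_of_int s * (\<Sum>k\<in>{1..K}. (l1 k - l2 k) * C s k) / piS M S s"
      using pp by (simp add: field_simps)
    finally show ?thesis .
  qed
  have b: "A (-1) + A 1 = 1 - risk M X S Y g" using b_part[OF g] by (simp add: A_def)
  have u: "(\<Sum>k\<in>{1..K}. (l1 k - l2 k) * unfair M X S g k)
      = (\<Sum>k\<in>{1..K}. (l1 k - l2 k) * C 1 k) / piS M S 1 - (\<Sum>k\<in>{1..K}. (l1 k - l2 k) * C (-1) k) / piS M S (-1)"
    unfolding unfair_eq C_def
    by (simp add: right_diff_distrib sum_subtractf sum_divide_distrib)
  show ?thesis using ce[of 1] ce[of "-1"] b u by simp
qed

lemma FR_eq:
  assumes g: "g \<in> classifiers K"
  shows "fair_risk M X S Y K eps l1 l2 g = 1 - ((\<Sum>s\<in>{-1,1::int}. cond_exp M S s (\<lambda>\<omega>. score M S p l1 l2 (g (X \<omega>) s) (X \<omega>) s))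
      + eps * (\<Sum>k\<in>{1..K}. l1 k + l2 k))"
proof -
  let ?D = "unfair M X S g"
  have "(\<Sum>k\<in>{1..K}. l1 k * (?D k - eps)) + (\<Sum>k\<in>{1..K}. l2 k * (- ?D k - eps))
     = (\<Sum>k\<in>{1..K}. l1 k * (?D k - eps) + l2 k * (- ?D k - eps))" by (rule sum.distrib[symmetric])
  also have "\<dots> = (\<Sum>k\<in>{1..K}. (l1 k - l2 k) * ?D k - eps * (l1 k + l2 k))"
    by (rule sum.cong) (auto simp: algebra_simps)
  also have "\<dots> = (\<Sum>k\<in>{1..K}. (l1 k - l2 k) * ?D k) - eps * (\<Sum>k\<in>{1..K}. l1 k + l2 k)"
    by (simp add: sum_subtractf sum_distrib_left)
  finally have e: "(\<Sum>k\<in>{1..K}. l1 k * (?D k - eps)) + (\<Sum>k\<in>{1..K}. l2 k * (- ?D k - eps))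
     = (\<Sum>k\<in>{1..K}. (l1 k - l2 k) * ?D k) - eps * (\<Sum>k\<in>{1..K}. l1 k + l2 k)" .
  show ?thesis unfolding fair_risk_def J_eq[OF g] using e by simp
qed

lemma H_fa: "Hfun M X S p K eps l1 l2 = 1 - fair_risk M X S Y K eps l1 l2 (fair_argmax M S p K l1 l2)"
  unfolding Hfun_def FR_eq[OF fa_cl] fa_max by simp

lemma ce_mono:
  assumes g: "g \<in> classifiers K" and h: "h \<in> classifiers K" and s: "s \<in> {-1,1}"
    and le: "\<And>x. score M S p l1 l2 (g x s) x s \<le> score M S p l1 l2 (h x s) x s"
  shows "cond_exp M S s (\<lambda>\<omega>. score M S p l1 l2 (g (X \<omega>) s) (X \<omega>) s)
      \<le> cond_exp M S s (\<lambda>\<omega>. score M S p l1 l2 (h (X \<omega>) s) (X \<omega>) s)"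
  unfolding cond_exp_def
proof (rule divide_right_mono)
  show "0 \<le> piS M S s" using pi_pos[OF s] by simp
  show "(\<integral>\<omega>. indicator {\<omega>\<in>space M. S \<omega> = s} \<omega> * score M S p l1 l2 (g (X \<omega>) s) (X \<omega>) s \<partial>M)
     \<le> (\<integral>\<omega>. indicator {\<omega>\<in>space M. S \<omega> = s} \<omega> * score M S p l1 l2 (h (X \<omega>) s) (X \<omega>) s \<partial>M)"
    using a_part[OF g s, of l1 l2] a_part[OF h s, of l1 l2]
    by (intro integral_mono) (auto intro: mult_left_mono le)
qed

lemma FR_min:
  assumes g: "g \<in> classifiers K"
  shows "fair_risk M X S Y K eps l1 l2 (fair_argmax M S p K l1 l2) \<le> fair_risk M X S Y K eps l1 l2 g"
proof -
  have "cond_exp M S s (\<lambda>\<omega>. score M S p l1 l2 (g (X \<omega>) s) (X \<omega>) s)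
      \<le> cond_exp M S s (\<lambda>\<omega>. score M S p l1 l2 (fair_argmax M S p K l1 l2 (X \<omega>) s) (X \<omega>) s)"
    if s: "s \<in> {-1,1}" for s
    by (rule ce_mono[OF g fa_cl s]) (use fa_prop cl_val[OF g s] in blast)
  from this[of 1] this[of "-1"] show ?thesis unfolding FR_eq[OF g] FR_eq[OF fa_cl] by simp
qed

lemma tie_null:
  assumes cont: "continuity_assumption M X S K p"
    and k: "k \<in> {1..K}" and j: "j \<in> {1..K}" and kj: "k \<noteq> j" and s: "s \<in> {-1,1}"
  shows "{\<omega>\<in>space M. S \<omega> = s \<and> p k (X \<omega>) (S \<omega>) - p j (X \<omega>) (S \<omega>) = c} \<in> null_sets M"
proof -
  define D where "D \<omega> = p k (X \<omega>) (S \<omega>) - p j (X \<omega>) (S \<omega>)" for \<omega>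
  have [measurable]: "D \<in> borel_measurable M" unfolding D_def using pXS_meas[OF k] pXS_meas[OF j] by measurable
  define F where "F t = cond_prob M S s {\<omega>\<in>space M. D \<omega> \<le> t}" for t
  have "continuous_on UNIV F" using cont k j kj s unfolding continuity_assumption_def F_def D_def by blast
  then have ic: "isCont F c" by (simp add: continuous_on_eq_continuous_at)
  define A where "A t = {\<omega>\<in>space M. D \<omega> \<le> t} \<inter> {\<omega>\<in>space M. S \<omega> = s}" for t
  have mA: "A t \<in> sets M" for t unfolding A_def by measurable
  have pp: "piS M S s > 0" using pi_pos[OF s] .
  have FA: "piS M S s * F t = measure M (A t)" for t
    unfolding F_def A_def cond_prob_def using pp by simp
  define N where "N = {\<omega>\<in>space M. S \<omega> = s \<and> D \<omega> = c}"
  have mN: "N \<in> sets M" unfolding N_def by measurable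
  have le0: "measure M N \<le> piS M S s * (F c - F (c - d))" if pos: "0 < d" for d
  proof -
    have sub: "A (c - d) \<subseteq> A c" unfolding A_def using pos by auto
    have "N \<subseteq> A c - A (c - d)" unfolding N_def A_def using pos by auto
    then have "measure M N \<le> measure M (A c - A (c - d))"
      using mA by (intro finite_measure_mono) auto
    also have "\<dots> = measure M (A c) - measure M (A (c - d))"
      by (rule finite_measure_Diff[OF mA mA sub])
    also have "\<dots> = piS M S s * (F c - F (c - d))"
      unfolding FA[symmetric] by (simp add: algebra_simps)
    finally show ?thesis .
  qed
  have le: "measure M N \<le> piS M S s * (F c - F (c - inverse (real (Suc n))))" for n
    by (rule le0) simp
  have "(\<lambda>n. c - inverse (real (Suc n))) \<longlonglongrightarrow> c - 0"
    by (intro tendsto_diff tendsto_const LIMSEQ_inverse_real_of_nat)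
  then have "(\<lambda>n. F (c - inverse (real (Suc n)))) \<longlonglongrightarrow> F c"
    using isCont_tendsto_compose[OF ic] by simp
  then have "(\<lambda>n. piS M S s * (F c - F (c - inverse (real (Suc n))))) \<longlonglongrightarrow> piS M S s * (F c - F c)"
    by (intro tendsto_intros)
  then have "measure M N \<le> 0"
    using le by (intro LIMSEQ_le_const[where a="measure M N"]) auto
  then have "measure M N = 0" using measure_nonneg[of M N] by linarith
  then have "N \<in> null_sets M" using mN by (intro null_setsI) (simp add: emeasure_eq_measure)
  then show ?thesis unfolding N_def D_def .
qed

lemma no_ties:
  assumes cont: "continuity_assumption M X S K p"
  shows "AE \<omega> in M. \<forall>k\<in>{1..K}. \<forall>j\<in>{1..K}. k \<noteq> j \<longrightarrow>
     score M S p l1 l2 k (X \<omega>) (S \<omega>) \<noteq> score M S p l1 l2 j (X \<omega>) (S \<omega>)"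
proof (intro AE_ball_countable[THEN iffD2] ballI countable_finite finite_atLeastAtMost)
  fix k j assume k: "k \<in> {1..K}" and j: "j \<in> {1..K}"
  show "AE \<omega> in M. k \<noteq> j \<longrightarrow> score M S p l1 l2 k (X \<omega>) (S \<omega>) \<noteq> score M S p l1 l2 j (X \<omega>) (S \<omega>)"
  proof (cases "k = j")
    case True then show ?thesis by simp
  next
    case kj: False
    define c where "c s = real_of_int s * ((l1 k - l2 k) - (l1 j - l2 j)) / piS M S s" for s :: int
    let ?N = "\<lambda>s. {\<omega>\<in>space M. S \<omega> = s \<and> p k (X \<omega>) (S \<omega>) - p j (X \<omega>) (S \<omega>) = c s}"
    have null: "?N 1 \<union> ?N (-1) \<in> null_sets M"
      using tie_null[OF cont k j kj, of 1 "c 1"] tie_null[OF cont k j kj, of "-1" "c (-1)"] by auto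
    show ?thesis
    proof (rule AE_I'[OF null], intro subsetI)
      fix \<omega> assume "\<omega> \<in> {\<omega> \<in> space M. \<not> (k \<noteq> j \<longrightarrow> score M S p l1 l2 k (X \<omega>) (S \<omega>) \<noteq> score M S p l1 l2 j (X \<omega>) (S \<omega>))}"
      then have w: "\<omega> \<in> space M" and eq: "score M S p l1 l2 k (X \<omega>) (S \<omega>) = score M S p l1 l2 j (X \<omega>) (S \<omega>)" by auto
      have sv: "S \<omega> \<in> {-1,1}" using Sv w by auto
      have pp: "piS M S (S \<omega>) > 0" using pi_pos[OF sv] .
      have "p k (X \<omega>) (S \<omega>) - p j (X \<omega>) (S \<omega>) = c (S \<omega>)"
        using eq pp unfolding score_def c_def by (simp add: field_simps)
      then show "\<omega> \<in> ?N 1 \<union> ?N (-1)" using w sv by auto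
    qed
  qed
qed

lemma fa_eventually:
  assumes nt: "\<forall>k\<in>{1..K}. \<forall>j\<in>{1..K}. k \<noteq> j \<longrightarrow> score M S p l1 l2 k x s \<noteq> score M S p l1 l2 j x s"
    and lim: "\<And>j. j\<in>{1..K} \<Longrightarrow> ((\<lambda>n. score M S p (m1 n) (m2 n) j x s) \<longlongrightarrow> score M S p l1 l2 j x s) F"
  shows "eventually (\<lambda>n. fair_argmax M S p K (m1 n) (m2 n) x s = fair_argmax M S p K l1 l2 x s) F"
proof -
  define k0 where "k0 = fair_argmax M S p K l1 l2 x s"
  have k0: "k0 \<in> {1..K}" "\<forall>j\<in>{1..K}. score M S p l1 l2 j x s \<le> score M S p l1 l2 k0 x s"
    using fa_prop[of l1 l2 x s] unfolding k0_def by auto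
  have strict: "score M S p l1 l2 j x s < score M S p l1 l2 k0 x s" if "j \<in> {1..K} - {k0}" for j
    using k0 nt that by (metis DiffE insertCI order_le_neq_trans)
  have "\<forall>j\<in>{1..K} - {k0}. eventually (\<lambda>n. 0 < score M S p (m1 n) (m2 n) k0 x s - score M S p (m1 n) (m2 n) j x s) F"
  proof
    fix j assume j: "j \<in> {1..K} - {k0}"
    have "((\<lambda>n. score M S p (m1 n) (m2 n) k0 x s - score M S p (m1 n) (m2 n) j x s) \<longlongrightarrow>
        score M S p l1 l2 k0 x s - score M S p l1 l2 j x s) F"
      using j k0(1) by (intro tendsto_diff lim) auto
    then show "eventually (\<lambda>n. 0 < score M S p (m1 n) (m2 n) k0 x s - score M S p (m1 n) (m2 n) j x s) F"
      by (rule order_tendstoD(1)) (use strict[OF j] in simp)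
  qed
  then have ev: "eventually (\<lambda>n. \<forall>j\<in>{1..K} - {k0}. 0 < score M S p (m1 n) (m2 n) k0 x s - score M S p (m1 n) (m2 n) j x s) F"
    by (intro eventually_ball_finite) auto
  show ?thesis
  proof (rule eventually_mono[OF ev])
    fix n assume H: "\<forall>j\<in>{1..K} - {k0}. 0 < score M S p (m1 n) (m2 n) k0 x s - score M S p (m1 n) (m2 n) j x s"
    have "fair_argmax M S p K (m1 n) (m2 n) x s = k0"
      unfolding fair_argmax_def
    proof (rule Least_equality)
      show "k0 \<in> {1..K} \<and> (\<forall>j\<in>{1..K}. score M S p (m1 n) (m2 n) j x s \<le> score M S p (m1 n) (m2 n) k0 x s)"
        using k0(1) H by (metis DiffI less_eq_real_def diff_gt_0_iff_gt empty_iff insert_iff order_refl)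
      fix y assume y: "y \<in> {1..K} \<and> (\<forall>j\<in>{1..K}. score M S p (m1 n) (m2 n) j x s \<le> score M S p (m1 n) (m2 n) y x s)"
      show "k0 \<le> y"
      proof (rule ccontr)
        assume "\<not> k0 \<le> y"
        then have "y \<in> {1..K} - {k0}" using y by auto
        then have "0 < score M S p (m1 n) (m2 n) k0 x s - score M S p (m1 n) (m2 n) y x s" using H by blast
        moreover have "score M S p (m1 n) (m2 n) k0 x s \<le> score M S p (m1 n) (m2 n) y x s" using y k0(1) by blast
        ultimately show False by linarith
      qed
    qed
    then show "fair_argmax M S p K (m1 n) (m2 n) x s = fair_argmax M S p K l1 l2 x s" unfolding k0_def .
  qed
qed

lemma unfair_conv:
  assumes cont: "continuity_assumption M X S K p"
    and lim1: "\<And>j. j\<in>{1..K} \<Longrightarrow> (\<lambda>n. m1 n j) \<longlonglongrightarrow> l1 j"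
    and lim2: "\<And>j. j\<in>{1..K} \<Longrightarrow> (\<lambda>n. m2 n j) \<longlonglongrightarrow> l2 j"
  shows "(\<lambda>n. unfair M X S (fair_argmax M S p K (m1 n) (m2 n)) k) \<longlonglongrightarrow> unfair M X S (fair_argmax M S p K l1 l2) k"
proof -
  define G where "G n \<omega> = fair_argmax M S p K (m1 n) (m2 n) (X \<omega>) (S \<omega>)" for n \<omega>
  define G0 where "G0 \<omega> = fair_argmax M S p K l1 l2 (X \<omega>) (S \<omega>)" for \<omega>
  have AEeq: "AE \<omega> in M. eventually (\<lambda>n. G n \<omega> = G0 \<omega>) sequentially"
    unfolding G_def G0_def using no_ties[OF cont, of l1 l2]
  proof eventually_elim
    case (elim \<omega>)
    show ?case
    proof (rule fa_eventually[OF elim])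
      fix j assume j: "j \<in> {1..K}"
      show "(\<lambda>n. score M S p (m1 n) (m2 n) j (X \<omega>) (S \<omega>)) \<longlonglongrightarrow> score M S p l1 l2 j (X \<omega>) (S \<omega>)"
        unfolding score_def by (intro tendsto_intros lim1 lim2 j)
    qed
  qed
  have conv: "(\<lambda>n. measure M ({\<omega>\<in>space M. G n \<omega> = k} \<inter> {\<omega>\<in>space M. S \<omega> = s}))
      \<longlonglongrightarrow> measure M ({\<omega>\<in>space M. G0 \<omega> = k} \<inter> {\<omega>\<in>space M. S \<omega> = s})" for s
  proof -
    have [measurable]: "G n \<in> M \<rightarrow>\<^sub>M count_space UNIV" for n unfolding G_def[abs_def] by (rule cl_meas[OF fa_cl])
    have [measurable]: "G0 \<in> M \<rightarrow>\<^sub>M count_space UNIV" unfolding G0_def[abs_def] by (rule cl_meas[OF fa_cl])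
    have e1: "measure M ({\<omega>\<in>space M. G n \<omega> = k} \<inter> {\<omega>\<in>space M. S \<omega> = s})
       = (\<integral>\<omega>. indicator {\<omega>\<in>space M. G n \<omega> = k \<and> S \<omega> = s} \<omega> \<partial>M)" for n
      by (subst ind_int) (measurable, auto intro!: arg_cong[where f="measure M"])
    have e0: "measure M ({\<omega>\<in>space M. G0 \<omega> = k} \<inter> {\<omega>\<in>space M. S \<omega> = s})
       = (\<integral>\<omega>. indicator {\<omega>\<in>space M. G0 \<omega> = k \<and> S \<omega> = s} \<omega> \<partial>M)"
      by (subst ind_int) (measurable, auto intro!: arg_cong[where f="measure M"])
    have "(\<lambda>n. (\<integral>\<omega>. indicator {\<omega>\<in>space M. G n \<omega> = k \<and> S \<omega> = s} \<omega> \<partial>M) :: real)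
       \<longlonglongrightarrow> (\<integral>\<omega>. indicator {\<omega>\<in>space M. G0 \<omega> = k \<and> S \<omega> = s} \<omega> \<partial>M)"
    proof (rule integral_dominated_convergence[where w="\<lambda>_. 1"])
      show "(\<lambda>\<omega>. indicator {\<omega>\<in>space M. G0 \<omega> = k \<and> S \<omega> = s} \<omega> :: real) \<in> borel_measurable M" by measurable
      show "(\<lambda>\<omega>. indicator {\<omega>\<in>space M. G n \<omega> = k \<and> S \<omega> = s} \<omega> :: real) \<in> borel_measurable M" for n by measurable
      show "integrable M (\<lambda>_. 1::real)" by simp
      show "AE \<omega> in M. norm (indicator {\<omega>\<in>space M. G n \<omega> = k \<and> S \<omega> = s} \<omega> :: real) \<le> 1" for n
        by (intro AE_I2) (auto simp: indicator_def)
      show "AE \<omega> in M. (\<lambda>n. indicator {\<omega>\<in>space M. G n \<omega> = k \<and> S \<omega> = s} \<omega> :: real)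
          \<longlonglongrightarrow> indicator {\<omega>\<in>space M. G0 \<omega> = k \<and> S \<omega> = s} \<omega>"
        using AEeq
      proof eventually_elim
        case (elim \<omega>)
        show ?case
          by (rule tendsto_eventually) (rule eventually_mono[OF elim], simp add: indicator_def)
      qed
    qed
    then show ?thesis unfolding e1 e0 .
  qed
  show ?thesis using conv unfolding unfair_eq G_def G0_def
    by (intro tendsto_diff tendsto_divide tendsto_const) (use pi_pos[of 1] pi_pos[of "-1"] in auto)
qed

lemma sum_upd: "k \<in> {1..K} \<Longrightarrow> (\<Sum>j\<in>{1..K}. (l(k := v)) j * f j) = (\<Sum>j\<in>{1..K}. l j * f j) + (v - l k) * (f k :: real)"
proof -
  assume k: "k \<in> {1..K}"
  have "(\<Sum>j\<in>{1..K}. (l(k := v)) j * f j) = v * f k + (\<Sum>j\<in>{1..K} - {k}. (l(k := v)) j * f j)"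
    using k by (subst sum.remove[of _ k]) auto
  also have "(\<Sum>j\<in>{1..K} - {k}. (l(k := v)) j * f j) = (\<Sum>j\<in>{1..K} - {k}. l j * f j)"
    by (rule sum.cong) auto
  also have "(\<Sum>j\<in>{1..K}. l j * f j) = l k * f k + (\<Sum>j\<in>{1..K} - {k}. l j * f j)"
    using k by (subst sum.remove[of _ k]) auto
  ultimately show ?thesis by (simp add: left_diff_distrib)
qed

lemma FR_upd1: "k \<in> {1..K} \<Longrightarrow> fair_risk M X S Y K eps (l1(k := l1 k + t)) l2 g
    = fair_risk M X S Y K eps l1 l2 g + t * (unfair M X S g k - eps)"
  unfolding fair_risk_def by (subst sum_upd) auto

lemma FR_upd2: "k \<in> {1..K} \<Longrightarrow> fair_risk M X S Y K eps l1 (l2(k := l2 k + t)) g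
    = fair_risk M X S Y K eps l1 l2 g + t * (- unfair M X S g k - eps)"
  unfolding fair_risk_def by (subst sum_upd) auto

lemma opt_ineq:
  assumes opt: "Hfun M X S p K eps l1 l2 \<le> Hfun M X S p K eps m1 m2"
  shows "fair_risk M X S Y K eps m1 m2 (fair_argmax M S p K m1 m2) \<le> fair_risk M X S Y K eps l1 l2 (fair_argmax M S p K m1 m2)"
  using opt H_fa[of eps l1 l2] H_fa[of eps m1 m2] FR_min[OF fa_cl, of eps l1 l2 m1 m2] by linarith

lemma deriv1:
  assumes cont: "continuity_assumption M X S K p"
    and opt: "\<And>n. Hfun M X S p K eps l1 l2 \<le> Hfun M X S p K eps (l1(k := l1 k + t n)) l2"
    and k: "k \<in> {1..K}" and t: "t \<longlonglongrightarrow> 0"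
  shows "(\<forall>n. 0 < t n) \<Longrightarrow> unfair M X S (fair_argmax M S p K l1 l2) k \<le> eps"
    and "(\<forall>n. t n < 0) \<Longrightarrow> eps \<le> unfair M X S (fair_argmax M S p K l1 l2) k"
proof -
  define D where "D n = unfair M X S (fair_argmax M S p K (l1(k := l1 k + t n)) l2) k" for n
  have ineq: "t n * (D n - eps) \<le> 0" for n
    using opt_ineq[OF opt[of n]] FR_upd1[OF k, of eps l1 "t n" l2 "fair_argmax M S p K (l1(k := l1 k + t n)) l2"] unfolding D_def by linarith
  have lim: "D \<longlonglongrightarrow> unfair M X S (fair_argmax M S p K l1 l2) k"
    unfolding D_def
  proof (rule unfair_conv[OF cont])
    fix j assume j: "j \<in> {1..K}"
    show "(\<lambda>n. (l1(k := l1 k + t n)) j) \<longlonglongrightarrow> l1 j"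
    proof (cases "j = k")
      case True
      have "(\<lambda>n. l1 k + t n) \<longlonglongrightarrow> l1 k + 0" by (intro tendsto_add tendsto_const t)
      then show ?thesis using True by simp
    qed simp
  qed simp
  show "(\<forall>n. 0 < t n) \<Longrightarrow> unfair M X S (fair_argmax M S p K l1 l2) k \<le> eps"
  proof -
    assume pos: "\<forall>n. 0 < t n"
    have "D n \<le> eps" for n using ineq[of n] pos[rule_format, of n] by (simp add: mult_le_0_iff)
    then show ?thesis by (intro LIMSEQ_le_const2[OF lim]) auto
  qed
  show "(\<forall>n. t n < 0) \<Longrightarrow> eps \<le> unfair M X S (fair_argmax M S p K l1 l2) k"
  proof -
    assume neg: "\<forall>n. t n < 0"
    have "eps \<le> D n" for n using ineq[of n] neg[rule_format, of n] by (simp add: mult_le_0_iff)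
    then show ?thesis by (intro LIMSEQ_le_const[OF lim]) auto
  qed
qed

lemma deriv2:
  assumes cont: "continuity_assumption M X S K p"
    and opt: "\<And>n. Hfun M X S p K eps l1 l2 \<le> Hfun M X S p K eps l1 (l2(k := l2 k + t n))"
    and k: "k \<in> {1..K}" and t: "t \<longlonglongrightarrow> 0"
  shows "(\<forall>n. 0 < t n) \<Longrightarrow> - unfair M X S (fair_argmax M S p K l1 l2) k \<le> eps"
    and "(\<forall>n. t n < 0) \<Longrightarrow> eps \<le> - unfair M X S (fair_argmax M S p K l1 l2) k"
proof -
  define D where "D n = - unfair M X S (fair_argmax M S p K l1 (l2(k := l2 k + t n))) k" for n
  have ineq: "t n * (D n - eps) \<le> 0" for n
    using opt_ineq[OF opt[of n]] FR_upd2[OF k, of eps l1 l2 "t n" "fair_argmax M S p K l1 (l2(k := l2 k + t n))"] unfolding D_def by linarith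
  have lim0: "(\<lambda>n. unfair M X S (fair_argmax M S p K l1 (l2(k := l2 k + t n))) k) \<longlonglongrightarrow> unfair M X S (fair_argmax M S p K l1 l2) k"
  proof (rule unfair_conv[OF cont])
    fix j assume j: "j \<in> {1..K}"
    show "(\<lambda>n. (l2(k := l2 k + t n)) j) \<longlonglongrightarrow> l2 j"
    proof (cases "j = k")
      case True
      have "(\<lambda>n. l2 k + t n) \<longlonglongrightarrow> l2 k + 0" by (intro tendsto_add tendsto_const t)
      then show ?thesis using True by simp
    qed simp
  qed simp
  have lim: "D \<longlonglongrightarrow> - unfair M X S (fair_argmax M S p K l1 l2) k"
    unfolding D_def by (intro tendsto_minus lim0)
  show "(\<forall>n. 0 < t n) \<Longrightarrow> - unfair M X S (fair_argmax M S p K l1 l2) k \<le> eps"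
  proof -
    assume pos: "\<forall>n. 0 < t n"
    have "D n \<le> eps" for n using ineq[of n] pos[rule_format, of n] by (simp add: mult_le_0_iff)
    then show ?thesis by (intro LIMSEQ_le_const2[OF lim]) auto
  qed
  show "(\<forall>n. t n < 0) \<Longrightarrow> eps \<le> - unfair M X S (fair_argmax M S p K l1 l2) k"
  proof -
    assume neg: "\<forall>n. t n < 0"
    have "eps \<le> D n" for n using ineq[of n] neg[rule_format, of n] by (simp add: mult_le_0_iff)
    then show ?thesis by (intro LIMSEQ_le_const[OF lim]) auto
  qed
qed

lemma nonneg_upd: "nonneg_vec K l \<Longrightarrow> 0 \<le> l k + t \<Longrightarrow> nonneg_vec K (l(k := l k + t))"
  unfolding nonneg_vec_def by auto

lemma kkt:
  assumes cont: "continuity_assumption M X S K p"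
    and n1: "nonneg_vec K l1" and n2: "nonneg_vec K l2"
    and opt: "\<forall>m1 m2. nonneg_vec K m1 \<and> nonneg_vec K m2 \<longrightarrow>
           Hfun M X S p K eps l1 l2 \<le> Hfun M X S p K eps m1 m2"
    and k: "k \<in> {1..K}"
  shows "\<bar>unfair M X S (fair_argmax M S p K l1 l2) k\<bar> \<le> eps"
    and "l1 k * (unfair M X S (fair_argmax M S p K l1 l2) k - eps) = 0"
    and "l2 k * (- unfair M X S (fair_argmax M S p K l1 l2) k - eps) = 0"
proof -
  let ?D = "unfair M X S (fair_argmax M S p K l1 l2) k"
  have l1k: "0 \<le> l1 k" and l2k: "0 \<le> l2 k" using n1 n2 k unfolding nonneg_vec_def by auto
  define tp where "tp n = inverse (real (Suc n))" for n
  have tp0: "tp \<longlonglongrightarrow> 0" unfolding tp_def by (rule LIMSEQ_inverse_real_of_nat)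
  have tppos: "\<forall>n. 0 < tp n" unfolding tp_def by simp
  have le1: "?D \<le> eps"
  proof (rule deriv1(1)[OF cont _ k tp0 tppos])
    fix n
    have "0 \<le> l1 k + tp n" using l1k tppos[rule_format, of n] by linarith
    then show "Hfun M X S p K eps l1 l2 \<le> Hfun M X S p K eps (l1(k := l1 k + tp n)) l2"
      using opt n2 nonneg_upd[OF n1] by blast
  qed
  have le2: "- ?D \<le> eps"
  proof (rule deriv2(1)[OF cont _ k tp0 tppos])
    fix n
    have "0 \<le> l2 k + tp n" using l2k tppos[rule_format, of n] by linarith
    then show "Hfun M X S p K eps l1 l2 \<le> Hfun M X S p K eps l1 (l2(k := l2 k + tp n))"
      using opt n1 nonneg_upd[OF n2] by blast
  qed
  show "\<bar>?D\<bar> \<le> eps" using le1 le2 by linarith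
  have neg_seq: "(\<lambda>n. - (c * tp n)) \<longlonglongrightarrow> 0" for c :: real
    using tendsto_minus[OF tendsto_mult[OF tendsto_const[of c] tp0]] by simp
  have nn: "0 \<le> c + - (c * tp n)" if "0 \<le> c" for c n
  proof -
    have "tp n \<le> 1" unfolding tp_def by (simp add: inverse_le_1_iff)
    then have "c * tp n \<le> c" using that by (simp add: mult_left_le)
    then show ?thesis by simp
  qed
  show "l1 k * (?D - eps) = 0"
  proof (cases "l1 k = 0")
    case False
    then have pos: "0 < l1 k" using l1k by simp
    have "eps \<le> ?D"
    proof (rule deriv1(2)[OF cont _ k neg_seq[of "l1 k"]])
      show "\<forall>n. - (l1 k * tp n) < 0" using pos tppos by simp
      fix n show "Hfun M X S p K eps l1 l2 \<le> Hfun M X S p K eps (l1(k := l1 k + - (l1 k * tp n))) l2"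
        using opt n1 n2 nonneg_upd[OF n1 nn[OF l1k]] by blast
    qed
    then show ?thesis using le1 by simp
  qed simp
  show "l2 k * (- ?D - eps) = 0"
  proof (cases "l2 k = 0")
    case False
    then have pos: "0 < l2 k" using l2k by simp
    have "eps \<le> - ?D"
    proof (rule deriv2(2)[OF cont _ k neg_seq[of "l2 k"]])
      show "\<forall>n. - (l2 k * tp n) < 0" using pos tppos by simp
      fix n show "Hfun M X S p K eps l1 l2 \<le> Hfun M X S p K eps l1 (l2(k := l2 k + - (l2 k * tp n)))"
        using opt n1 n2 nonneg_upd[OF n2 nn[OF l2k]] by blast
    qed
    then show ?thesis using le2 by simp
  qed simp
qed

lemma mGY_neq: assumes g: "g \<in> classifiers K"
  shows "{\<omega>\<in>space M. g (X \<omega>) (S \<omega>) \<noteq> Y \<omega>} \<in> sets M"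
proof -
  have [measurable]: "(\<lambda>\<omega>. g (X \<omega>) (S \<omega>)) \<in> M \<rightarrow>\<^sub>M count_space UNIV" using cl_meas[OF g] .
  have "{\<omega>\<in>space M. g (X \<omega>) (S \<omega>) \<noteq> Y \<omega>} = space M - (\<Union>k. {\<omega>\<in>space M. g (X \<omega>) (S \<omega>) = k \<and> Y \<omega> = k})" by auto
  also have "\<dots> \<in> sets M" by measurable
  finally show ?thesis .
qed

lemma ae_eq:
  assumes cont: "continuity_assumption M X S K p"
    and g0: "g0 \<in> classifiers K"
    and le: "fair_risk M X S Y K eps l1 l2 g0 \<le> fair_risk M X S Y K eps l1 l2 (fair_argmax M S p K l1 l2)"
  shows "AE \<omega> in M. g0 (X \<omega>) (S \<omega>) = fair_argmax M S p K l1 l2 (X \<omega>) (S \<omega>)"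
proof -
  let ?gs = "fair_argmax M S p K l1 l2"
  let ?c = "\<lambda>g s. cond_exp M S s (\<lambda>\<omega>. score M S p l1 l2 (g (X \<omega>) s) (X \<omega>) s)"
  have mono: "?c g0 s \<le> ?c ?gs s" if s: "s \<in> {-1,1}" for s
    by (rule ce_mono[OF g0 fa_cl s]) (use fa_prop cl_val[OF g0 s] in blast)
  have "?c ?gs 1 + ?c ?gs (-1) \<le> ?c g0 1 + ?c g0 (-1)"
    using le unfolding FR_eq[OF g0] FR_eq[OF fa_cl] by simp
  then have eqc: "?c g0 s = ?c ?gs s" if s: "s \<in> {-1,1}" for s
    using mono[of 1] mono[of "-1"] s by auto
  have AEs: "AE \<omega> in M. S \<omega> = s \<longrightarrow> score M S p l1 l2 (g0 (X \<omega>) s) (X \<omega>) s = score M S p l1 l2 (?gs (X \<omega>) s) (X \<omega>) s"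
    if s: "s \<in> {-1,1}" for s
  proof -
    define f where "f \<omega> = indicator {\<omega>\<in>space M. S \<omega> = s} \<omega> * score M S p l1 l2 (?gs (X \<omega>) s) (X \<omega>) s
        - indicator {\<omega>\<in>space M. S \<omega> = s} \<omega> * score M S p l1 l2 (g0 (X \<omega>) s) (X \<omega>) s" for \<omega>
    have i0: "integrable M (\<lambda>\<omega>. indicator {\<omega>\<in>space M. S \<omega> = s} \<omega> * score M S p l1 l2 (g0 (X \<omega>) s) (X \<omega>) s)"
      using a_part[OF g0 s] by blast
    have iS: "integrable M (\<lambda>\<omega>. indicator {\<omega>\<in>space M. S \<omega> = s} \<omega> * score M S p l1 l2 (?gs (X \<omega>) s) (X \<omega>) s)"
      using a_part[OF fa_cl s] by blast
    have fi: "integrable M f" unfolding f_def by (rule Bochner_Integration.integrable_diff[OF iS i0])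
    have pp: "piS M S s > 0" using pi_pos[OF s] .
    have "integral\<^sup>L M f = 0"
      using eqc[OF s] pp unfolding f_def cond_exp_def
      by (simp add: Bochner_Integration.integral_diff[OF iS i0])
    moreover have fnn: "AE \<omega> in M. 0 \<le> f \<omega>"
    proof (intro AE_I2)
      fix \<omega>
      have "score M S p l1 l2 (g0 (X \<omega>) s) (X \<omega>) s \<le> score M S p l1 l2 (?gs (X \<omega>) s) (X \<omega>) s"
        using fa_prop cl_val[OF g0 s] by blast
      then show "0 \<le> f \<omega>" unfolding f_def by (simp add: indicator_def)
    qed
    ultimately have "AE \<omega> in M. f \<omega> = 0" using integral_nonneg_eq_0_iff_AE[OF fi fnn] by simp
    then show ?thesis
    proof (rule AE_mp[OF _ AE_I2], intro impI)
      fix \<omega> assume "\<omega> \<in> space M" "f \<omega> = 0" "S \<omega> = s"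
      then show "score M S p l1 l2 (g0 (X \<omega>) s) (X \<omega>) s = score M S p l1 l2 (?gs (X \<omega>) s) (X \<omega>) s"
        by (simp add: f_def indicator_def)
    qed
  qed
  show ?thesis using AEs[OF insertI2[OF singletonI]] AEs[OF insertI1] no_ties[OF cont, of l1 l2] AE_space
  proof eventually_elim
    case (elim \<omega>)
    have sv: "S \<omega> \<in> {-1,1}" using Sv elim(4) by auto
    have eq: "score M S p l1 l2 (g0 (X \<omega>) (S \<omega>)) (X \<omega>) (S \<omega>) = score M S p l1 l2 (?gs (X \<omega>) (S \<omega>)) (X \<omega>) (S \<omega>)"
      using elim(1,2) sv by auto
    have "g0 (X \<omega>) (S \<omega>) \<in> {1..K}" using cl_val[OF g0 sv] .
    moreover have "?gs (X \<omega>) (S \<omega>) \<in> {1..K}" using fa_prop by blast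
    ultimately show ?case using elim(3) eq by blast
  qed
qed

lemma main:
  assumes cont: "continuity_assumption M X S K p"
    and n1: "nonneg_vec K l1" and n2: "nonneg_vec K l2"
    and opt: "\<forall>m1 m2. nonneg_vec K m1 \<and> nonneg_vec K m2 \<longrightarrow>
           Hfun M X S p K eps l1 l2 \<le> Hfun M X S p K eps m1 m2"
  shows "(\<forall>g0. (g0 \<in> eps_fair M X S K eps \<and>
                 (\<forall>g\<in>eps_fair M X S K eps. risk M X S Y g0 \<le> risk M X S Y g))
            \<longleftrightarrow> (g0 \<in> classifiers K \<and>
                 (\<forall>g\<in>classifiers K. fair_risk M X S Y K eps l1 l2 g0
                                      \<le> fair_risk M X S Y K eps l1 l2 g)))
         \<and> fair_argmax M S p K l1 l2 \<in> eps_fair M X S K eps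
         \<and> (\<forall>g\<in>eps_fair M X S K eps.
              risk M X S Y (fair_argmax M S p K l1 l2) \<le> risk M X S Y g)"
proof -
  let ?gs = "fair_argmax M S p K l1 l2"
  let ?FR = "fair_risk M X S Y K eps l1 l2"
  note kk = kkt[OF cont n1 n2 opt]
  have gs_fair: "?gs \<in> eps_fair M X S K eps" unfolding eps_fair_def using fa_cl kk(1) by blast
  have z1: "(\<Sum>k\<in>{1..K}. l1 k * (unfair M X S ?gs k - eps)) = 0"
    by (rule sum.neutral) (use kk(2) in blast)
  have z2: "(\<Sum>k\<in>{1..K}. l2 k * (- unfair M X S ?gs k - eps)) = 0"
    by (rule sum.neutral) (use kk(3) in blast)
  have FRgs: "?FR ?gs = risk M X S Y ?gs"
    unfolding fair_risk_def z1 z2 by simp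
  have FRle: "?FR g \<le> risk M X S Y g" if g: "g \<in> eps_fair M X S K eps" for g
  proof -
    have D: "\<bar>unfair M X S g k\<bar> \<le> eps" if "k \<in> {1..K}" for k using g that unfolding eps_fair_def by blast
    have "(\<Sum>k\<in>{1..K}. l1 k * (unfair M X S g k - eps)) \<le> 0"
      using n1 D unfolding nonneg_vec_def by (intro sum_nonpos mult_nonneg_nonpos) (auto simp: abs_le_iff)
    moreover have "(\<Sum>k\<in>{1..K}. l2 k * (- unfair M X S g k - eps)) \<le> 0"
      using n2 D unfolding nonneg_vec_def by (intro sum_nonpos mult_nonneg_nonpos) (auto simp: abs_le_iff)
    ultimately show ?thesis unfolding fair_risk_def by linarith
  qed
  have fair_cl: "g \<in> eps_fair M X S K eps \<Longrightarrow> g \<in> classifiers K" for g unfolding eps_fair_def by blast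
  have gs_opt: "\<forall>g\<in>eps_fair M X S K eps. risk M X S Y ?gs \<le> risk M X S Y g"
  proof
    fix g assume g: "g \<in> eps_fair M X S K eps"
    have "risk M X S Y ?gs = ?FR ?gs" using FRgs by simp
    also have "\<dots> \<le> ?FR g" using FR_min[OF fair_cl[OF g]] .
    also have "\<dots> \<le> risk M X S Y g" using FRle[OF g] .
    finally show "risk M X S Y ?gs \<le> risk M X S Y g" .
  qed
  have iff: "(g0 \<in> eps_fair M X S K eps \<and> (\<forall>g\<in>eps_fair M X S K eps. risk M X S Y g0 \<le> risk M X S Y g))
      \<longleftrightarrow> (g0 \<in> classifiers K \<and> (\<forall>g\<in>classifiers K. ?FR g0 \<le> ?FR g))" for g0
  proof
    assume A: "g0 \<in> eps_fair M X S K eps \<and> (\<forall>g\<in>eps_fair M X S K eps. risk M X S Y g0 \<le> risk M X S Y g)"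
    have "?FR g0 \<le> ?FR g" if g: "g \<in> classifiers K" for g
    proof -
      have "?FR g0 \<le> risk M X S Y g0" using FRle A by blast
      also have "\<dots> \<le> risk M X S Y ?gs" using A gs_fair by blast
      also have "\<dots> = ?FR ?gs" using FRgs by simp
      also have "\<dots> \<le> ?FR g" using FR_min[OF g] .
      finally show ?thesis .
    qed
    then show "g0 \<in> classifiers K \<and> (\<forall>g\<in>classifiers K. ?FR g0 \<le> ?FR g)" using A fair_cl by blast
  next
    assume B: "g0 \<in> classifiers K \<and> (\<forall>g\<in>classifiers K. ?FR g0 \<le> ?FR g)"
    then have g0: "g0 \<in> classifiers K" by blast
    have ae: "AE \<omega> in M. g0 (X \<omega>) (S \<omega>) = ?gs (X \<omega>) (S \<omega>)"
      using ae_eq[OF cont g0] B fa_cl by blast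
    have [measurable]: "(\<lambda>\<omega>. g0 (X \<omega>) (S \<omega>)) \<in> M \<rightarrow>\<^sub>M count_space UNIV" using cl_meas[OF g0] .
    have [measurable]: "(\<lambda>\<omega>. ?gs (X \<omega>) (S \<omega>)) \<in> M \<rightarrow>\<^sub>M count_space UNIV" using cl_meas[OF fa_cl] .
    have ueq: "unfair M X S g0 k = unfair M X S ?gs k" for k
    proof -
      have "measure M ({\<omega>\<in>space M. g0 (X \<omega>) (S \<omega>) = k} \<inter> {\<omega>\<in>space M. S \<omega> = s})
          = measure M ({\<omega>\<in>space M. ?gs (X \<omega>) (S \<omega>) = k} \<inter> {\<omega>\<in>space M. S \<omega> = s})" for s
      proof (rule measure_eq_AE)
        show "AE \<omega> in M. (\<omega> \<in> {\<omega>\<in>space M. g0 (X \<omega>) (S \<omega>) = k} \<inter> {\<omega>\<in>space M. S \<omega> = s}) =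
           (\<omega> \<in> {\<omega>\<in>space M. ?gs (X \<omega>) (S \<omega>) = k} \<inter> {\<omega>\<in>space M. S \<omega> = s})"
          using ae by eventually_elim auto
      qed measurable
      then show ?thesis unfolding unfair_eq by simp
    qed
    have req: "risk M X S Y g0 = risk M X S Y ?gs"
      unfolding risk_def
    proof (rule measure_eq_AE[OF _ mGY_neq[OF g0] mGY_neq[OF fa_cl]])
      show "AE \<omega> in M. (\<omega> \<in> {\<omega>\<in>space M. g0 (X \<omega>) (S \<omega>) \<noteq> Y \<omega>}) =
           (\<omega> \<in> {\<omega>\<in>space M. ?gs (X \<omega>) (S \<omega>) \<noteq> Y \<omega>})"
        using ae by eventually_elim auto
    qed
    have "g0 \<in> eps_fair M X S K eps" using g0 gs_fair ueq unfolding eps_fair_def by simp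
    moreover have "\<forall>g\<in>eps_fair M X S K eps. risk M X S Y g0 \<le> risk M X S Y g" using gs_opt req by simp
    ultimately show "g0 \<in> eps_fair M X S K eps \<and> (\<forall>g\<in>eps_fair M X S K eps. risk M X S Y g0 \<le> risk M X S Y g)" by blast
  qed
  show ?thesis using iff gs_fair gs_opt by blast
qed

end

theorem proposition2:
  fixes M :: "'a measure" and X :: "'a \<Rightarrow> 'x::euclidean_space"
    and S :: "'a \<Rightarrow> int" and Y :: "'a \<Rightarrow> nat"
    and K :: nat and eps :: real and p :: "nat \<Rightarrow> 'x \<Rightarrow> int \<Rightarrow> real"
    and l1 l2 :: "nat \<Rightarrow> real"
  assumes "prob_space M"
    and "X \<in> borel_measurable M"
    and "S \<in> M \<rightarrow>\<^sub>M count_space UNIV"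
    and "Y \<in> M \<rightarrow>\<^sub>M count_space UNIV"
    and "\<forall>\<omega>\<in>space M. S \<omega> \<in> {-1, 1}"
    and "\<forall>\<omega>\<in>space M. Y \<omega> \<in> {1..K}"
    and "\<forall>s\<in>{-1, 1::int}. piS M S s > 0"
    and "is_cond_prob_version M X S Y K p"
    and "0 \<le> eps"
    and "continuity_assumption M X S K p"
    and "nonneg_vec K l1" and "nonneg_vec K l2"
    and "\<forall>m1 m2. nonneg_vec K m1 \<and> nonneg_vec K m2 \<longrightarrow>
           Hfun M X S p K eps l1 l2 \<le> Hfun M X S p K eps m1 m2"
  shows "(\<forall>g0. (g0 \<in> eps_fair M X S K eps \<and>
                 (\<forall>g\<in>eps_fair M X S K eps. risk M X S Y g0 \<le> risk M X S Y g))
            \<longleftrightarrow> (g0 \<in> classifiers K \<and>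
                 (\<forall>g\<in>classifiers K. fair_risk M X S Y K eps l1 l2 g0
                                      \<le> fair_risk M X S Y K eps l1 l2 g)))
         \<and> fair_argmax M S p K l1 l2 \<in> eps_fair M X S K eps
         \<and> (\<forall>g\<in>eps_fair M X S K eps.
              risk M X S Y (fair_argmax M S p K l1 l2) \<le> risk M X S Y g)"
proof -
  have "fsetup M X S Y K p"
    unfolding fsetup_def fsetup_axioms_def using assms(1-8) by blast
  then interpret F: fsetup M X S Y K p .
  show ?thesis by (rule F.main) (use assms in auto)
qed

end
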